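(* Let $\epsilon:B\to A$ be a local augmentation. (a) If $\alpha,\beta$ are invertible $n\times n$ matrices over $B$ with $\epsilon(\alpha)=\epsilon(\beta)$ the identity matrix, then $D(\alpha\beta)=D(\alpha)D(\beta)$ in $\epsilon^{-1}(1)/C_0$. (b) If $\alpha$ is an $m\times n$ matrix and $\beta$ an $n\times m$ matrix over $B$ (i.e. $\alpha:B^n\to B^m$, $\beta:B^m\to B^n$) and $\epsilon(\alpha)=0$ or $\epsilon(\beta)=0$ (or both), then $D(1+\alpha\beta)=D(1+\beta\alpha)$ in $\epsilon^{-1}(1)/C_0$.
   Context: Rings are associative with $1$. A local augmentation is a ring homomorphism $\epsilon:B\to A$ with a ring homomorphism $j:A\to B$, $\epsilon j=\mathrm{id}_A$, such that every square matrix over $B$ whose image under $\epsilon$ is invertible is itself invertible; $\epsilon$ is applied to matrices entrywise. Under the hypothesis of (b), $1+\alpha\beta$ and $1+\beta\alpha$ are invertible with $\epsilon$-image the identity. $C_0$ is the subgroup of units of $B$ generated by $\{(1+ab)(1+ba)^{-1}\mid a,b\in B,\ \epsilon(a)=0\}$; it is a normal subgroup of $\epsilon^{-1}(1)$ with abelian quotient. For an invertible $k\times k$ matrix $\gamma$ over $B$ with $\epsilon(\gamma)$ the identity, $D(\gamma)\in\epsilon^{-1}(1)/C_0$ is defined recursively: if $k=1$, $D(\gamma)$ is the class of $\gamma$; if $k\ge2$, write $\gamma=\begin{pmatrix}\gamma_{11}&\gamma_{12}\\ \gamma_{21}&\gamma_{22}\end{pmatrix}$ with $\gamma_{11}$ of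 size $1\times1$ (invertible since $\epsilon(\gamma_{11})=1$) and set $D(\gamma)=\gamma_{11}D(\gamma_{22}-\gamma_{21}\gamma_{11}^{-1}\gamma_{12})$. *)

theory Defs
  imports "Jordan_Normal_Form.Matrix"
begin

definition uinv :: "'b::ring_1 \<Rightarrow> 'b" where
  "uinv u = (THE v. u * v = 1 \<and> v * u = 1)"

definition is_ring_hom :: "('b::ring_1 \<Rightarrow> 'a::ring_1) \<Rightarrow> bool" where
  "is_ring_hom f \<longleftrightarrow> (\<forall>x y. f (x + y) = f x + f y) \<and> (\<forall>x y. f (x * y) = f x * f y) \<and> f 1 = 1"

definition local_augmentation :: "('b::ring_1 \<Rightarrow> 'a::ring_1) \<Rightarrow> ('a \<Rightarrow> 'b) \<Rightarrow> bool" where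
  "local_augmentation eps j \<longleftrightarrow> is_ring_hom eps \<and> is_ring_hom j \<and> (\<forall>x. eps (j x) = x) \<and>
     (\<forall>k (M :: 'b mat). M \<in> carrier_mat k k \<longrightarrow> invertible_mat (map_mat eps M) \<longrightarrow> invertible_mat M)"

inductive_set C0 :: "('b::ring_1 \<Rightarrow> 'a::ring_1) \<Rightarrow> 'b set" for eps where
  one: "1 \<in> C0 eps"
| gen: "eps a = 0 \<Longrightarrow> (1 + a * b) * uinv (1 + b * a) \<in> C0 eps"
| mult: "x \<in> C0 eps \<Longrightarrow> y \<in> C0 eps \<Longrightarrow> x * y \<in> C0 eps"
| inv: "x \<in> C0 eps \<Longrightarrow> uinv x \<in> C0 eps"

text \<open>Equality of classes in eps^{-1}(1)/C_0 of two elements of eps^{-1}(1).\<close>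
definition eqC0 :: "('b::ring_1 \<Rightarrow> 'a::ring_1) \<Rightarrow> 'b \<Rightarrow> 'b \<Rightarrow> bool" where
  "eqC0 eps x y \<longleftrightarrow> x * uinv y \<in> C0 eps"

definition schur1 :: "'b::ring_1 mat \<Rightarrow> 'b mat" where
  "schur1 g = mat (dim_row g - 1) (dim_col g - 1)
     (\<lambda>(i, k). g $$ (i + 1, k + 1) - g $$ (i + 1, 0) * uinv (g $$ (0, 0)) * g $$ (0, k + 1))"

text \<open>A representative in B of D(g); D(g) itself is its class modulo C_0.
  Convention: the empty (0x0) matrix gets 1, so for k = 1 the value is g 0 0.\<close>
function Drep :: "'b::ring_1 mat \<Rightarrow> 'b" where
  "Drep g = (if dim_row g = 0 then 1 else g $$ (0, 0) * Drep (schur1 g))"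
  by auto
termination
  by (relation "measure dim_row") (auto simp: schur1_def)

end

theory Submission
  imports Defs
begin

lemma uinv_eq: fixes x :: "'b::ring_1" assumes "x*y=1" "y*x=1" shows "uinv x = y"
  unfolding uinv_def
proof (rule the_equality)
  show "x * y = 1 \<and> y * x = 1" using assms by auto
  fix v assume v: "x * v = 1 \<and> v * x = 1"
  have "v = v * (x * y)" using assms by simp
  also have "\<dots> = (v*x)*y" by (simp add: mult.assoc)
  also have "\<dots> = y" using v by simp
  finally show "v = y" .
qed

lemma uinv_1[simp]: "uinv (1::'b::ring_1) = 1" by (rule uinv_eq) auto

context
  fixes eps :: "'b::ring_1 \<Rightarrow> 'a::ring_1" and jj :: "'a \<Rightarrow> 'b"
  assumes LA: "local_augmentation eps jj"
begin

lemma hom: "eps (x + y) = eps x + eps y" "eps (x * y) = eps x * eps y" "eps 1 = 1"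
  using LA unfolding local_augmentation_def is_ring_hom_def by auto

lemma hom0[simp]: "eps 0 = 0"
proof -
  have "eps 0 = eps 0 + eps 0" using hom(1)[of 0 0] by simp
  thus ?thesis by simp
qed

lemma hom_uminus[simp]: "eps (- x) = - eps x"
proof -
  have "eps (-x) + eps x = 0" using hom(1)[of "-x" x] by simp
  thus ?thesis by (simp add: eq_neg_iff_add_eq_0)
qed

lemma hom_minus[simp]: "eps (x - y) = eps x - eps y"
  using hom(1)[of x "-y"] by simp

lemma hom_simps[simp]: "eps (x + y) = eps x + eps y" "eps (x * y) = eps x * eps y" "eps 1 = 1"
  using hom by auto

lemma hom_sum[simp]: "eps (sum f A) = sum (\<lambda>i. eps (f i)) A"
  by (induction A rule: infinite_finite_induct) auto

lemma unit_eps: assumes "eps x = 1" shows "x * uinv x = 1" "uinv x * x = 1"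
proof -
  let ?M = "mat 1 1 (\<lambda>_. x)"
  have "map_mat eps ?M = 1\<^sub>m 1" using assms by (intro eq_matI) auto
  moreover have "invertible_mat (1\<^sub>m 1 :: 'a mat)" unfolding invertible_mat_def inverts_mat_def
    by (auto intro!: exI[of _ "1\<^sub>m 1"])
  ultimately have "invertible_mat (map_mat eps ?M)" by simp
  moreover have "?M \<in> carrier_mat 1 1" by simp
  ultimately have "invertible_mat ?M" using LA unfolding local_augmentation_def by blast
  then obtain B where B0: "?M * B = 1\<^sub>m 1" "B * ?M = 1\<^sub>m (dim_row B)"
    unfolding invertible_mat_def inverts_mat_def by auto
  hence dB: "dim_col B = 1" "dim_row B = 1" by (metis index_mult_mat(3) index_one_mat(3),
     metis index_mult_mat(3) index_one_mat(2) index_one_mat(3) dim_col_mat(1))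
  have B: "?M * B = 1\<^sub>m 1" "B * ?M = 1\<^sub>m 1" using B0 dB by auto
  have "(?M * B) $$ (0,0) = 1" "(B * ?M) $$ (0,0) = 1" using B by auto
  hence "x * B $$ (0,0) = 1" "B $$ (0,0) * x = 1" using dB by (auto simp: scalar_prod_def)
  hence "uinv x = B $$ (0,0)" by (rule uinv_eq)
  thus "x * uinv x = 1" "uinv x * x = 1" using \<open>x * B $$ (0,0) = 1\<close> \<open>B $$ (0,0) * x = 1\<close> by auto
qed

lemma eps_uinv: assumes "eps x = 1" shows "eps (uinv x) = 1"
proof -
  have "eps x * eps (uinv x) = 1" using unit_eps(1)[OF assms] by (metis hom_simps(2,3))
  thus ?thesis using assms by simp
qed

lemma uinv_mult: assumes "eps x = 1" "eps y = 1" shows "uinv (x*y) = uinv y * uinv x"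
proof (rule uinv_eq)
  have "x * y * (uinv y * uinv x) = x * (y * uinv y) * uinv x" by (simp add: mult.assoc)
  thus "x * y * (uinv y * uinv x) = 1" using unit_eps assms by simp
  have "uinv y * uinv x * (x * y) = uinv y * (uinv x * x) * y" by (simp add: mult.assoc)
  thus "uinv y * uinv x * (x * y) = 1" using unit_eps assms by simp
qed

lemma uinv_uinv: assumes "eps x = 1" shows "uinv (uinv x) = x"
  by (rule uinv_eq) (use unit_eps[OF assms] in auto)

lemma C0_eps: "x \<in> C0 eps \<Longrightarrow> eps x = 1"
proof (induction rule: C0.induct)
  case (gen a b)
  then show ?case using eps_uinv[of "1 + b*a"] by simp
qed (auto simp: eps_uinv)

lemma comm_C0: assumes "eps x = 1" "eps y = 1" shows "x * y * uinv x * uinv y \<in> C0 eps"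
proof -
  let ?a = "(x - 1) * uinv y" and ?b = y
  have ea: "eps ?a = 0" using assms by simp
  have yi: "y * uinv y = 1" "uinv y * y = 1" using unit_eps assms by auto
  have 1: "1 + ?a * ?b = x" using yi by (simp add: mult.assoc)
  have 2: "1 + ?b * ?a = y * x * uinv y" using yi by (simp add: algebra_simps mult.assoc)
  have 3: "uinv (y * x * uinv y) = y * uinv x * uinv y"
    using assms by (simp add: uinv_mult eps_uinv uinv_uinv mult.assoc)
  have "(1 + ?a * ?b) * uinv (1 + ?b * ?a) \<in> C0 eps" by (rule C0.gen[of eps ?a ?b, OF ea])
  thus ?thesis unfolding 1 2 3 by (simp add: mult.assoc)
qed

lemma conj_C0: assumes "eps g = 1" "c \<in> C0 eps" shows "g * c * uinv g \<in> C0 eps"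
proof -
  have ec: "eps c = 1" using C0_eps assms by auto
  have "g * c * uinv g = (g * c * uinv g * uinv c) * c"
    using unit_eps[OF ec] by (simp add: mult.assoc)
  thus ?thesis using C0.mult[OF comm_C0[OF assms(1) ec] assms(2)] by simp
qed

lemma eqC0_refl: "eps x = 1 \<Longrightarrow> eqC0 eps x x"
  unfolding eqC0_def using unit_eps C0.one by simp

lemma eqC0_eq: "eps x = 1 \<Longrightarrow> x = y \<Longrightarrow> eqC0 eps x y"
  using eqC0_refl by simp

lemma eqC0_sym: assumes "eps x = 1" "eps y = 1" "eqC0 eps x y" shows "eqC0 eps y x"
proof -
  have "uinv (x * uinv y) \<in> C0 eps" using assms C0.inv unfolding eqC0_def by blast
  thus ?thesis using assms by (simp add: eqC0_def uinv_mult eps_uinv uinv_uinv)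
qed

lemma eqC0_trans: assumes "eps x = 1" "eps y = 1" "eps z = 1" "eqC0 eps x y" "eqC0 eps y z"
  shows "eqC0 eps x z"
proof -
  have "x * uinv y * (y * uinv z) = x * (uinv y * y) * uinv z" by (simp add: mult.assoc)
  thus ?thesis using C0.mult assms unit_eps[of y] unfolding eqC0_def by fastforce
qed

lemma eqC0_mult: assumes "eps x = 1" "eps y = 1" "eps x' = 1" "eps y' = 1"
  "eqC0 eps x x'" "eqC0 eps y y'" shows "eqC0 eps (x*y) (x'*y')"
proof -
  have u: "uinv x * (x * uinv x') = uinv x'" using unit_eps[of x] assms
    by (simp add: mult.assoc[symmetric])
  have "x * y * uinv (x' * y') = (x * (y * uinv y') * uinv x) * (x * uinv x')"
    using assms by (simp add: uinv_mult mult.assoc u)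
  moreover have "x * (y * uinv y') * uinv x \<in> C0 eps" using conj_C0 assms unfolding eqC0_def by simp
  ultimately show ?thesis using assms C0.mult unfolding eqC0_def by simp
qed

lemma eqC0_comm: assumes "eps x = 1" "eps y = 1" shows "eqC0 eps (x*y) (y*x)"
  using comm_C0[OF assms] assms unfolding eqC0_def by (simp add: uinv_mult mult.assoc)

lemma eqC0_C0: assumes "c \<in> C0 eps" "eps x = 1" shows "eqC0 eps (c * x) x"
  using assms unit_eps[of x] unfolding eqC0_def by (simp add: mult.assoc)

end


definition sc :: "'b::ring_1 \<Rightarrow> 'b mat" where "sc x = mat 1 1 (\<lambda>_. x)"
definition rr :: "'b::ring_1 mat \<Rightarrow> 'b mat" where "rr g = mat 1 (dim_col g - 1) (\<lambda>(_,j). g $$ (0, j+1))"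
definition cc :: "'b::ring_1 mat \<Rightarrow> 'b mat" where "cc g = mat (dim_row g - 1) 1 (\<lambda>(i,_). g $$ (i+1, 0))"
definition br :: "'b::ring_1 mat \<Rightarrow> 'b mat" where "br g = mat (dim_row g - 1) (dim_col g - 1) (\<lambda>(i,j). g $$ (i+1, j+1))"

declare Drep.simps[simp del]

lemma sc_carrier[simp]: "sc x \<in> carrier_mat 1 1" "dim_row (sc x) = 1" "dim_col (sc x) = 1"
  "i < 1 \<Longrightarrow> j < 1 \<Longrightarrow> sc x $$ (i,j) = x"
  by (auto simp: sc_def)

lemma rr_carrier[simp]: "dim_row (rr g) = 1" "dim_col (rr g) = dim_col g - 1"
  "j < dim_col g - 1 \<Longrightarrow> i < 1 \<Longrightarrow> rr g $$ (i,j) = g $$ (0, j+1)"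
  by (auto simp: rr_def)
lemma cc_carrier[simp]: "dim_row (cc g) = dim_row g - 1" "dim_col (cc g) = 1"
  "i < dim_row g - 1 \<Longrightarrow> j < 1 \<Longrightarrow> cc g $$ (i,j) = g $$ (i+1, 0)"
  by (auto simp: cc_def)
lemma br_carrier[simp]: "dim_row (br g) = dim_row g - 1" "dim_col (br g) = dim_col g - 1"
  "i < dim_row g - 1 \<Longrightarrow> j < dim_col g - 1 \<Longrightarrow> br g $$ (i,j) = g $$ (i+1, j+1)"
  by (auto simp: br_def)

lemma mult1_index[simp]: "dim_col A = 1 \<Longrightarrow> dim_row B = 1 \<Longrightarrow> i < dim_row A \<Longrightarrow> j < dim_col B \<Longrightarrow>
  (A * B) $$ (i,j) = A $$ (i,0) * B $$ (0,j)"
  by (simp add: scalar_prod_def)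

lemma mult_index_sum: "i < dim_row A \<Longrightarrow> j < dim_col B \<Longrightarrow> dim_col A = dim_row B \<Longrightarrow>
  (A * B) $$ (i,j) = (\<Sum>l<dim_col A. A $$ (i,l) * B $$ (l,j))"
  by (simp add: scalar_prod_def lessThan_atLeast0)

lemma split_mat: assumes "g \<in> carrier_mat (Suc m) (Suc n)"
  shows "g = four_block_mat (sc (g $$ (0,0))) (rr g) (cc g) (br g)"
  using assms by (intro eq_matI) (auto simp: index_mat_four_block)

lemma mat11: "M \<in> carrier_mat 1 1 \<Longrightarrow> M = sc (M $$ (0,0))"
  by (intro eq_matI) auto

lemma one_sc: "1\<^sub>m 1 = sc 1" by (intro eq_matI) auto

lemma Drep0: "dim_row g = 0 \<Longrightarrow> Drep g = 1"
  by (subst Drep.simps) simp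

lemma Drep_block: assumes "r \<in> carrier_mat 1 k" "s \<in> carrier_mat k 1" "A \<in> carrier_mat k k"
  shows "Drep (four_block_mat (sc a) r s A) = a * Drep (A - s * sc (uinv a) * r)"
proof -
  have "schur1 (four_block_mat (sc a) r s A) = A - s * sc (uinv a) * r"
    using assms unfolding schur1_def by (intro eq_matI) (auto simp: mult.assoc simp del: index_mult_mat(1))
  thus ?thesis using assms by (subst Drep.simps) simp
qed

lemma Drep_one: "Drep (1\<^sub>m n :: 'b::ring_1 mat) = 1"
proof (induction n)
  case 0 thus ?case by (simp add: Drep0)
next
  case (Suc n)
  have "schur1 (1\<^sub>m (Suc n) :: 'b mat) = 1\<^sub>m n" unfolding schur1_def by (intro eq_matI) auto
  thus ?case using Suc by (subst Drep.simps) simp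
qed



lemma sc1_mult[simp]: "dim_row A = 1 \<Longrightarrow> sc 1 * A = A" "dim_col A = 1 \<Longrightarrow> A * sc 1 = A"
  by (simp_all add: one_sc[symmetric])

context
  fixes eps :: "'b::ring_1 \<Rightarrow> 'a::ring_1" and jj :: "'a \<Rightarrow> 'b"
  assumes LA: "local_augmentation eps jj"
begin

lemma map_mult: "dim_col A = dim_row B \<Longrightarrow> map_mat eps (A * B) = map_mat eps A * map_mat eps B"
  by (intro eq_matI) (auto simp: mult_index_sum hom_sum[OF LA] hom_simps[OF LA] simp del: index_mult_mat(1))

lemma eps_idx: "map_mat eps g = M \<Longrightarrow> i < dim_row g \<Longrightarrow> j < dim_col g \<Longrightarrow> eps (g $$ (i,j)) = M $$ (i,j)"
  by auto

lemma Drep_eps: "g \<in> carrier_mat n n \<Longrightarrow> map_mat eps g = 1\<^sub>m n \<Longrightarrow> eps (Drep g) = 1"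
proof (induction n arbitrary: g)
  case 0 thus ?case by (simp add: Drep0 hom_simps[OF LA])
next
  case (Suc n)
  have e: "i < Suc n \<Longrightarrow> k < Suc n \<Longrightarrow> eps (g $$ (i,k)) = (if i = k then 1 else 0)" for i k
    using eps_idx[OF Suc.prems(2)] Suc.prems(1) by auto
  have "map_mat eps (schur1 g) = 1\<^sub>m n" using Suc.prems(1)
    unfolding schur1_def by (intro eq_matI) (auto simp: e hom_simps[OF LA] hom_minus[OF LA])
  moreover have "schur1 g \<in> carrier_mat n n" using Suc.prems(1) unfolding schur1_def by auto
  ultimately have "eps (Drep (schur1 g)) = 1" using Suc.IH by blast
  thus ?case using Suc.prems(1) e[of 0 0] by (subst Drep.simps) (simp add: hom_simps[OF LA])
qed

lemma P1L: assumes Y: "Y \<in> carrier_mat (Suc k) (Suc k)" and ey: "eps (Y $$ (0,0)) = 1"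
  and l: "l \<in> carrier_mat k 1"
  shows "Drep (four_block_mat (sc 1) (0\<^sub>m 1 k) l (1\<^sub>m k) * Y) = Drep Y"
proof -
  define y R S Y' where "y = Y $$ (0,0)" "R = rr Y" "S = cc Y" "Y' = br Y"
  have c: "R \<in> carrier_mat 1 k" "S \<in> carrier_mat k 1" "Y' \<in> carrier_mat k k"
    using Y unfolding y_R_S_Y'_def by auto
  have YY: "Y = four_block_mat (sc y) R S Y'" using split_mat[OF Y] unfolding y_R_S_Y'_def .
  have yu: "y * uinv y = 1" using unit_eps[OF LA ey] unfolding y_R_S_Y'_def by simp
  have yu': "y * (uinv y * x) = x" for x using yu by (simp add: mult.assoc[symmetric])
  have "four_block_mat (sc 1) (0\<^sub>m 1 k) l (1\<^sub>m k) * Y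
     = four_block_mat (sc y) R (l * sc y + S) (l * R + Y')"
    unfolding YY using c l
    by (subst mult_four_block_mat[of _ 1 1 _ k _ k _ _ 1 _ k]) auto
  also have "Drep \<dots> = y * Drep (l * R + Y' - (l * sc y + S) * sc (uinv y) * R)"
    using c l by (intro Drep_block) auto
  also have "l * R + Y' - (l * sc y + S) * sc (uinv y) * R = Y' - S * sc (uinv y) * R"
    using c l by (intro eq_matI) (auto simp: algebra_simps yu' simp del: index_mult_mat(1))
  also have "y * Drep \<dots> = Drep Y"
    unfolding YY using c by (intro Drep_block[symmetric]) auto
  finally show ?thesis .
qed

lemma P1R: assumes Y: "Y \<in> carrier_mat (Suc k) (Suc k)" and ey: "eps (Y $$ (0,0)) = 1"
  and u: "u \<in> carrier_mat 1 k"
  shows "Drep (Y * four_block_mat (sc 1) u (0\<^sub>m k 1) (1\<^sub>m k)) = Drep Y"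
proof -
  define y R S Y' where "y = Y $$ (0,0)" "R = rr Y" "S = cc Y" "Y' = br Y"
  have c: "R \<in> carrier_mat 1 k" "S \<in> carrier_mat k 1" "Y' \<in> carrier_mat k k"
    using Y unfolding y_R_S_Y'_def by auto
  have YY: "Y = four_block_mat (sc y) R S Y'" using split_mat[OF Y] unfolding y_R_S_Y'_def .
  have yu: "uinv y * y = 1" using unit_eps[OF LA ey] unfolding y_R_S_Y'_def by simp
  have yu': "uinv y * (y * x) = x" for x using yu by (simp add: mult.assoc[symmetric])
  have "Y * four_block_mat (sc 1) u (0\<^sub>m k 1) (1\<^sub>m k)
     = four_block_mat (sc y) (sc y * u + R) S (S * u + Y')"
    unfolding YY using c u
    by (subst mult_four_block_mat[of _ 1 1 _ k _ k _ _ 1 _ k]) auto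
  also have "Drep \<dots> = y * Drep (S * u + Y' - S * sc (uinv y) * (sc y * u + R))"
    using c u by (intro Drep_block) auto
  also have "S * u + Y' - S * sc (uinv y) * (sc y * u + R) = Y' - S * sc (uinv y) * R"
    using c u by (intro eq_matI) (auto simp: algebra_simps yu' simp del: index_mult_mat(1))
  also have "y * Drep \<dots> = Drep Y"
    unfolding YY using c by (intro Drep_block[symmetric]) auto
  finally show ?thesis .
qed

end


context
  fixes eps :: "'b::ring_1 \<Rightarrow> 'a::ring_1" and jj :: "'a \<Rightarrow> 'b"
  assumes LA: "local_augmentation eps jj"
begin

lemmas hs = hom_simps[OF LA] hom_minus[OF LA] hom_uminus[OF LA] hom0[OF LA] hom_sum[OF LA]

lemma D_vec: "l \<in> carrier_mat k 1 \<Longrightarrow> u \<in> carrier_mat 1 k \<Longrightarrow>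
   map_mat eps l = 0\<^sub>m k 1 \<or> map_mat eps u = 0\<^sub>m 1 k \<Longrightarrow>
   eqC0 eps (Drep (1\<^sub>m k + l * u)) (1 + (u * l) $$ (0,0))"
proof (induction k arbitrary: l u)
  case 0
  have "(u * l) $$ (0,0) = 0" using 0 by (simp add: scalar_prod_def)
  moreover have "Drep (1\<^sub>m 0 + l * u) = 1" using 0 by (intro Drep0) auto
  ultimately show ?case using eqC0_refl[OF LA, of 1] by (simp add: hs)
next
  case (Suc k)
  note cl = Suc.prems(1) and cu = Suc.prems(2)
  define l0 u0 where "l0 = l $$ (0,0)" "u0 = u $$ (0,0)"
  define l' where "l' = mat k 1 (\<lambda>(i,_). l $$ (i+1,0))"
  define u' where "u' = mat 1 k (\<lambda>(_,j). u $$ (0,j+1))"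
  have c': "l' \<in> carrier_mat k 1" "u' \<in> carrier_mat 1 k" unfolding l'_def u'_def by auto
  have Z: "eps (l $$ (i,0)) * x * eps (u $$ (0,j)) = 0" "eps (u $$ (0,j)) * x * eps (l $$ (i,0)) = 0"
    if "i < Suc k" "j < Suc k" for i j x
  proof -
    have "eps (l $$ (i,0)) = 0 \<or> eps (u $$ (0,j)) = 0"
      using Suc.prems(3) that cl cu eps_idx[OF LA, of l "0\<^sub>m (Suc k) 1" i 0] eps_idx[OF LA, of u "0\<^sub>m 1 (Suc k)" 0 j] by auto
    thus "eps (l $$ (i,0)) * x * eps (u $$ (0,j)) = 0" "eps (u $$ (0,j)) * x * eps (l $$ (i,0)) = 0" by auto
  qed
  define c where "c = uinv (1 + l0 * u0)"
  define w where "w = 1 - u0 * c * l0"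
  have e1: "eps (1 + l0 * u0) = 1" using Z(1)[of 0 0 1] unfolding l0_u0_def by (simp add: hs)
  have cu1: "(1 + l0 * u0) * c = 1" "c * (1 + l0 * u0) = 1" using unit_eps[OF LA e1] unfolding c_def by auto
  have w1: "w * (1 + u0 * l0) = 1"
  proof -
    have "w * (1 + u0 * l0) = 1 + u0 * l0 - u0 * (c * (1 + l0 * u0)) * l0"
      unfolding w_def by (simp add: algebra_simps)
    thus ?thesis using cu1 by simp
  qed
  have w2: "(1 + u0 * l0) * w = 1"
  proof -
    have "(1 + u0 * l0) * w = 1 + u0 * l0 - u0 * ((1 + l0 * u0) * c) * l0"
      unfolding w_def by (simp add: algebra_simps)
    thus ?thesis using cu1 by simp
  qed
  have wi: "uinv (1 + u0 * l0) = w" using uinv_eq[OF w2 w1] .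
  have step1: "1\<^sub>m (Suc k) + l * u = four_block_mat (sc (1 + l0 * u0)) (sc l0 * u') (l' * sc u0) (1\<^sub>m k + l' * u')"
    using cl cu unfolding l0_u0_def l'_def u'_def by (intro eq_matI) (auto simp del: index_mult_mat(1))
  have step2: "Drep (1\<^sub>m (Suc k) + l * u) = (1 + l0 * u0) * Drep (1\<^sub>m k + l' * u' - l' * sc u0 * sc c * (sc l0 * u'))"
    unfolding step1 c_def using c' by (intro Drep_block) auto
  have step3: "1\<^sub>m k + l' * u' - l' * sc u0 * sc c * (sc l0 * u') = 1\<^sub>m k + l' * (sc w * u')"
    using c' unfolding w_def by (intro eq_matI) (auto simp: algebra_simps simp del: index_mult_mat(1))
  define t' where "t' = (u' * l') $$ (0,0)"
  have IHpre: "map_mat eps l' = 0\<^sub>m k 1 \<or> map_mat eps (sc w * u') = 0\<^sub>m 1 k"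
  proof (cases "map_mat eps l = 0\<^sub>m (Suc k) 1")
    case True
    have "map_mat eps l' = 0\<^sub>m k 1" unfolding l'_def
      using eps_idx[OF LA True] cl by (intro eq_matI) auto
    thus ?thesis by simp
  next
    case False
    hence F: "map_mat eps u = 0\<^sub>m 1 (Suc k)" using Suc.prems(3) by simp
    have "map_mat eps (sc w * u') = 0\<^sub>m 1 k" unfolding u'_def
      using eps_idx[OF LA F] cu by (intro eq_matI) (auto simp: hs simp del: index_mult_mat(1))
    thus ?thesis by simp
  qed
  have IH: "eqC0 eps (Drep (1\<^sub>m k + l' * (sc w * u'))) (1 + ((sc w * u') * l') $$ (0,0))"
  proof -
    have "sc w * u' \<in> carrier_mat 1 k" using c' unfolding carrier_mat_def by auto
    thus ?thesis using Suc.IH[of l' "sc w * u'"] c' IHpre by blast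
  qed
  have t1: "((sc w * u') * l') $$ (0,0) = w * t'"
    unfolding t'_def using c' by (subst assoc_mult_mat[of _ 1 1 _ k _ 1]) (auto simp del: index_mult_mat(1))
  have t2: "(u * l) $$ (0,0) = u0 * l0 + t'"
    unfolding t'_def l0_u0_def using cl cu c' unfolding l'_def u'_def
    by (simp add: mult_index_sum sum.lessThan_Suc_shift del: index_mult_mat(1) sum.lessThan_Suc)
  have et': "eps t' = 0" unfolding t'_def using c' Z(2)[of _ _ 1]
    by (simp add: mult_index_sum hs l'_def u'_def del: index_mult_mat(1))
  have eD': "eps (Drep (1\<^sub>m k + l' * (sc w * u'))) = 1"
  proof (rule Drep_eps[OF LA])
    show "1\<^sub>m k + l' * (sc w * u') \<in> carrier_mat k k" using c' by auto
    show "map_mat eps (1\<^sub>m k + l' * (sc w * u')) = 1\<^sub>m k"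
      using c' Z(1) by (intro eq_matI) (auto simp: hs l'_def u'_def mult.assoc simp del: index_mult_mat(1))
  qed
  have ew: "eps w = 1" using eps_uinv[OF LA, of "1 + u0 * l0"] Z(2)[of 0 0 1] wi unfolding l0_u0_def by (simp add: hs)
  have eg1: "eps (1 + w * t') = 1" using et' by (simp add: hs)
  have gC0: "(1 + l0 * u0) * w \<in> C0 eps"
  proof (cases "map_mat eps l = 0\<^sub>m (Suc k) 1")
    case True
    hence "eps l0 = 0" using eps_idx[OF LA True] cl unfolding l0_u0_def by auto
    from C0.gen[of eps l0 u0, OF this] show ?thesis unfolding wi .
  next
    case False
    hence F: "map_mat eps u = 0\<^sub>m 1 (Suc k)" using Suc.prems(3) by simp
    hence "eps u0 = 0" using eps_idx[OF LA F] cu unfolding l0_u0_def by auto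
    from C0.inv[OF C0.gen[of eps u0 l0, OF this]]
    have "uinv ((1 + u0 * l0) * uinv (1 + l0 * u0)) \<in> C0 eps" .
    moreover have "uinv ((1 + u0 * l0) * uinv (1 + l0 * u0)) = (1 + l0 * u0) * w"
      using e1 ew wi eps_uinv[OF LA e1] Z(2)[of 0 0 1]
      by (simp add: uinv_mult[OF LA] uinv_uinv[OF LA] hs l0_u0_def)
    ultimately show ?thesis by simp
  qed
  have fin: "(1 + l0 * u0) * (1 + w * t') = ((1 + l0 * u0) * w) * (1 + (u * l) $$ (0,0))"
  proof -
    have "w * (1 + (u * l) $$ (0,0)) = w * (1 + u0 * l0) + w * t'" unfolding t2 by (simp add: algebra_simps)
    thus ?thesis using w1 by (simp add: mult.assoc)
  qed
  have eul: "eps (1 + (u * l) $$ (0,0)) = 1" unfolding t2 using et' Z(2)[of 0 0 1] by (simp add: hs l0_u0_def)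
  have A1: "eqC0 eps (Drep (1\<^sub>m (Suc k) + l * u)) ((1 + l0 * u0) * (1 + w * t'))"
    unfolding step2 step3
    using eqC0_mult[OF LA e1 eD' e1 eg1 eqC0_refl[OF LA e1]] IH t1 by simp
  have A2: "eqC0 eps ((1 + l0 * u0) * (1 + w * t')) (1 + (u * l) $$ (0,0))"
    unfolding fin by (rule eqC0_C0[OF LA gC0 eul])
  show ?case
    by (rule eqC0_trans[OF LA _ _ _ A1 A2]) (use e1 eg1 eul eD' step2 step3 in \<open>simp_all add: hs\<close>)
qed

end


context
  fixes eps :: "'b::ring_1 \<Rightarrow> 'a::ring_1" and jj :: "'a \<Rightarrow> 'b"
  assumes LA: "local_augmentation eps jj"
begin

lemmas hs' = hom_simps[OF LA] hom_minus[OF LA] hom_uminus[OF LA] hom0[OF LA] hom_sum[OF LA]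

lemma eqC0_cong3: assumes "eqC0 eps y y'" "eps x = 1" "eps z = 1" "eps y = 1" "eps y' = 1"
  shows "eqC0 eps (x * y * z) (x * y' * z)"
proof -
  have "eqC0 eps (x * y) (x * y')" by (rule eqC0_mult[OF LA]) (use assms eqC0_refl[OF LA] in auto)
  thus ?thesis by (intro eqC0_mult[OF LA]) (use assms eqC0_refl[OF LA] in \<open>auto simp: hs'\<close>)
qed

lemma Sc_eps: assumes g: "g \<in> carrier_mat (Suc k) (Suc k)" and e: "map_mat eps g = 1\<^sub>m (Suc k)"
  shows "map_mat eps (br g - cc g * sc (uinv (g $$ (0,0))) * rr g) = 1\<^sub>m k"
proof -
  have e': "i < Suc k \<Longrightarrow> j < Suc k \<Longrightarrow> eps (g $$ (i,j)) = (if i = j then 1 else 0)" for i j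
    using eps_idx[OF LA e] g by auto
  show ?thesis using g by (intro eq_matI) (auto simp: hs' e' simp del: index_mult_mat(1))
qed

lemma Drep_split: assumes g: "g \<in> carrier_mat (Suc k) (Suc k)"
  shows "Drep g = g $$ (0,0) * Drep (br g - cc g * sc (uinv (g $$ (0,0))) * rr g)"
  by (subst split_mat[OF g]) (rule Drep_block, use g in auto)

lemma D_mult: "\<alpha> \<in> carrier_mat n n \<Longrightarrow> \<beta> \<in> carrier_mat n n \<Longrightarrow> map_mat eps \<alpha> = 1\<^sub>m n \<Longrightarrow>
  map_mat eps \<beta> = 1\<^sub>m n \<Longrightarrow> eqC0 eps (Drep (\<alpha> * \<beta>)) (Drep \<alpha> * Drep \<beta>)"
proof (induction n arbitrary: \<alpha> \<beta>)
  case 0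
  thus ?case using eqC0_refl[OF LA, of 1] by (simp add: Drep0 hs')
next
  case (Suc k)
  note ca = Suc.prems(1) and cb = Suc.prems(2)
  have ea: "i < Suc k \<Longrightarrow> j < Suc k \<Longrightarrow> eps (\<alpha> $$ (i,j)) = (if i = j then 1 else 0)" for i j
    using eps_idx[OF LA Suc.prems(3)] ca by auto
  have eb: "i < Suc k \<Longrightarrow> j < Suc k \<Longrightarrow> eps (\<beta> $$ (i,j)) = (if i = j then 1 else 0)" for i j
    using eps_idx[OF LA Suc.prems(4)] cb by auto
  define a r s A where "a = \<alpha> $$ (0,0)" "r = rr \<alpha>" "s = cc \<alpha>" "A = br \<alpha>"
  define b r' s' B where "b = \<beta> $$ (0,0)" "r' = rr \<beta>" "s' = cc \<beta>" "B = br \<beta>"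
  define Sa where "Sa = A - s * sc (uinv a) * r"
  define Sb where "Sb = B - s' * sc (uinv b) * r'"
  have c: "r \<in> carrier_mat 1 k" "s \<in> carrier_mat k 1" "A \<in> carrier_mat k k"
     "r' \<in> carrier_mat 1 k" "s' \<in> carrier_mat k 1" "B \<in> carrier_mat k k"
     "Sa \<in> carrier_mat k k" "Sb \<in> carrier_mat k k"
    using ca cb unfolding a_r_s_A_def b_r'_s'_B_def Sa_def Sb_def by auto
  have eab: "eps a = 1" "eps b = 1" using ea[of 0 0] eb[of 0 0] unfolding a_r_s_A_def b_r'_s'_B_def by auto
  have ua: "a * uinv a = 1" "uinv a * a = 1" "b * uinv b = 1" "uinv b * b = 1"
    using unit_eps[OF LA eab(1)] unit_eps[OF LA eab(2)] by auto
  have ua': "uinv a * (a * x) = x" "b * (uinv b * x) = x" for x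
    using ua by (simp_all add: mult.assoc[symmetric])
  have aS: "\<alpha> = four_block_mat (sc a) r s A" using split_mat[OF ca] unfolding a_r_s_A_def .
  have bS: "\<beta> = four_block_mat (sc b) r' s' B" using split_mat[OF cb] unfolding b_r'_s'_B_def .
  have es: "map_mat eps s' = 0\<^sub>m k 1" using c cb eb unfolding b_r'_s'_B_def by (intro eq_matI) auto
  have er: "i < k \<Longrightarrow> eps (r $$ (0,i)) = 0" for i using c ca ea unfolding a_r_s_A_def by auto
  define La where "La = four_block_mat (sc 1) (0\<^sub>m 1 k) (s * sc (uinv a)) (1\<^sub>m k)"
  define Ya where "Ya = four_block_mat (sc a) r (0\<^sub>m k 1) Sa"
  define Zb where "Zb = four_block_mat (sc b) (0\<^sub>m 1 k) s' Sb"
  define Ub where "Ub = four_block_mat (sc 1) (sc (uinv b) * r') (0\<^sub>m k 1) (1\<^sub>m k)"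
  have cL: "La \<in> carrier_mat (Suc k) (Suc k)" "Ya \<in> carrier_mat (Suc k) (Suc k)"
    "Zb \<in> carrier_mat (Suc k) (Suc k)" "Ub \<in> carrier_mat (Suc k) (Suc k)"
    unfolding La_def Ya_def Zb_def Ub_def using c by (auto intro!: carrier_matI)
  have fa: "\<alpha> = La * Ya"
  proof -
    have "La * Ya = four_block_mat (sc 1 * sc a + 0\<^sub>m 1 k * 0\<^sub>m k 1) (sc 1 * r + 0\<^sub>m 1 k * Sa)
      (s * sc (uinv a) * sc a + 1\<^sub>m k * 0\<^sub>m k 1) (s * sc (uinv a) * r + 1\<^sub>m k * Sa)"
      unfolding La_def Ya_def using c by (intro mult_four_block_mat) auto
    also have "\<dots> = four_block_mat (sc a) r s A"
      using c unfolding Sa_def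
      by (intro cong_four_block_mat eq_matI) (auto simp: mult.assoc ua simp del: index_mult_mat(1))
    finally show ?thesis using aS by simp
  qed
  have fb: "\<beta> = Zb * Ub"
  proof -
    have "Zb * Ub = four_block_mat (sc b * sc 1 + 0\<^sub>m 1 k * 0\<^sub>m k 1) (sc b * (sc (uinv b) * r') + 0\<^sub>m 1 k * 1\<^sub>m k)
      (s' * sc 1 + Sb * 0\<^sub>m k 1) (s' * (sc (uinv b) * r') + Sb * 1\<^sub>m k)"
      unfolding Zb_def Ub_def using c by (intro mult_four_block_mat) auto
    also have "\<dots> = four_block_mat (sc b) r' s' B"
      using c unfolding Sb_def
      by (intro cong_four_block_mat eq_matI) (auto simp: mult.assoc ua' simp del: index_mult_mat(1))
    finally show ?thesis using bS by simp
  qed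
  define t where "t = (r * s') $$ (0,0)"
  define p where "p = a * b + t"
  have et: "eps t = 0" unfolding t_def using c er
    by (simp add: mult_index_sum hs' es eps_idx[OF LA es] del: index_mult_mat(1))
  have ep: "eps p = 1" unfolding p_def using eab et by (simp add: hs')
  define X where "X = four_block_mat (sc p) (r * Sb) (Sa * s') (Sa * Sb)"
  have fX: "Ya * Zb = X"
  proof -
    have "Ya * Zb = four_block_mat (sc a * sc b + r * s') (sc a * 0\<^sub>m 1 k + r * Sb)
      (0\<^sub>m k 1 * sc b + Sa * s') (0\<^sub>m k 1 * 0\<^sub>m 1 k + Sa * Sb)"
      unfolding Ya_def Zb_def using c by (intro mult_four_block_mat) auto
    also have "\<dots> = X" unfolding X_def p_def t_def
      using c by (intro cong_four_block_mat eq_matI) (auto simp del: index_mult_mat(1))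
    finally show ?thesis .
  qed
  have cX: "X \<in> carrier_mat (Suc k) (Suc k)" unfolding X_def using c by (auto intro!: carrier_matI)
  have X00: "X $$ (0,0) = p" unfolding X_def using c by simp
  have XU00: "(X * Ub) $$ (0,0) = p"
    using cX cL X00 unfolding Ub_def
    by (simp add: mult_index_sum sum.lessThan_Suc_shift del: index_mult_mat(1) sum.lessThan_Suc)
  have ab: "\<alpha> * \<beta> = La * (X * Ub)"
  proof -
    have z: "Zb * Ub \<in> carrier_mat (Suc k) (Suc k)" using cL by auto
    have "La * Ya * (Zb * Ub) = La * (Ya * (Zb * Ub))" by (rule assoc_mult_mat[OF cL(1,2) z])
    also have "Ya * (Zb * Ub) = Ya * Zb * Ub" using cL by simp
    finally show ?thesis unfolding fa fb fX[symmetric] .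
  qed
  have D1: "Drep (\<alpha> * \<beta>) = Drep X"
  proof -
    have "Drep (\<alpha> * \<beta>) = Drep (X * Ub)" unfolding ab La_def
      by (rule P1L[OF LA]) (use cX cL XU00 ep c in auto)
    also have "\<dots> = Drep X" unfolding Ub_def
      by (rule P1R[OF LA]) (use cX X00 ep c in auto)
    finally show ?thesis .
  qed
  define q where "q = uinv p"
  have pq: "p * q = 1" "q * p = 1" using unit_eps[OF LA ep] unfolding q_def by auto
  define M where "M = 1\<^sub>m k + s' * (sc (- q) * r)"
  have cM: "M \<in> carrier_mat k k" unfolding M_def using c by auto
  have D2: "Drep X = p * Drep (Sa * Sb - Sa * s' * sc q * (r * Sb))"
    unfolding X_def q_def using c by (intro Drep_block) auto
  have M': "M = 1\<^sub>m k - s' * sc q * r" unfolding M_def using c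
    by (intro eq_matI) (auto simp: mult.assoc simp del: index_mult_mat(1))
  have D3: "Sa * Sb - Sa * s' * sc q * (r * Sb) = (Sa * M) * Sb"
  proof -
    have "Sa * M = Sa - Sa * (s' * sc q * r)" unfolding M' using c
      by (subst mult_minus_distrib_mat[of _ k k]) auto
    moreover have W: "Sa * (s' * sc q * r) \<in> carrier_mat k k" using c by (auto intro!: carrier_matI)
    ultimately have "(Sa * M) * Sb = Sa * Sb - Sa * (s' * sc q * r) * Sb" using c
      by (simp add: minus_mult_distrib_mat[OF c(7) W c(8)])
    also have "Sa * (s' * sc q * r) * Sb = Sa * s' * sc q * (r * Sb)"
    proof -
      have q1: "sc q \<in> carrier_mat 1 1" by (rule sc_carrier(1))
      have sq: "s' * sc q \<in> carrier_mat k 1" using c(5) q1 by (rule mult_carrier_mat)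
      have sqr: "s' * sc q * r \<in> carrier_mat k k" using sq c(1) by (rule mult_carrier_mat)
      have rS: "r * Sb \<in> carrier_mat 1 k" using c(1) c(8) by (rule mult_carrier_mat)
      have "Sa * (s' * sc q * r) * Sb = Sa * ((s' * sc q * r) * Sb)" by (rule assoc_mult_mat[OF c(7) sqr c(8)])
      also have "(s' * sc q * r) * Sb = (s' * sc q) * (r * Sb)" by (rule assoc_mult_mat[OF sq c(1) c(8)])
      also have "Sa * ((s' * sc q) * (r * Sb)) = (Sa * (s' * sc q)) * (r * Sb)" by (rule assoc_mult_mat[OF c(7) sq rS, symmetric])
      also have "Sa * (s' * sc q) = Sa * s' * sc q" by (rule assoc_mult_mat[OF c(7) c(5) q1, symmetric])
      finally show ?thesis .
    qed
    finally show ?thesis by simp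
  qed
  have eSa: "map_mat eps Sa = 1\<^sub>m k" unfolding Sa_def a_r_s_A_def using Sc_eps[OF ca Suc.prems(3)] .
  have eSb: "map_mat eps Sb = 1\<^sub>m k" unfolding Sb_def b_r'_s'_B_def using Sc_eps[OF cb Suc.prems(4)] .
  have eM: "map_mat eps M = 1\<^sub>m k" unfolding M_def using c eps_idx[OF LA es]
    by (intro eq_matI) (auto simp: hs' simp del: index_mult_mat(1))
  have eSaM: "map_mat eps (Sa * M) = 1\<^sub>m k" using map_mult[OF LA, of Sa M] c cM eSa eM by simp
  have IH1: "eqC0 eps (Drep ((Sa * M) * Sb)) (Drep (Sa * M) * Drep Sb)"
    by (rule Suc.IH) (use c cM eSaM eSb in auto)
  have IH2: "eqC0 eps (Drep (Sa * M)) (Drep Sa * Drep M)"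
    by (rule Suc.IH) (use c cM eSa eM in auto)
  have Dv: "eqC0 eps (Drep M) (1 + ((sc (- q) * r) * s') $$ (0,0))" unfolding M_def
    by (rule D_vec[OF LA]) (use c es in \<open>auto intro!: carrier_matI\<close>)
  have qt: "((sc (- q) * r) * s') $$ (0,0) = - q * t" unfolding t_def using c
    by (subst assoc_mult_mat[of _ 1 1 _ k _ 1]) (auto simp del: index_mult_mat(1))
  define x y m e where "x = Drep Sa" "y = Drep Sb" "m = Drep M" "e = 1 + - q * t"
  have eDSM: "eps (Drep (Sa * M)) = 1" by (rule Drep_eps[OF LA mult_carrier_mat[OF c(7) cM] eSaM])
  have exy: "eps x = 1" "eps y = 1" "eps m = 1" "eps e = 1" "eps (Drep (Sa * M)) = 1"
    unfolding x_y_m_e_def using Drep_eps[OF LA] c cM eSa eSb eM eSaM et eDSM by (auto simp: hs')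
  have epq: "eps q = 1" unfolding q_def using eps_uinv[OF LA ep] .
  have pe: "p * e = a * b" unfolding x_y_m_e_def p_def
  proof -
    have "(a * b + t) * (1 + - q * t) = a * b + t - ((a * b + t) * q) * t" by (simp add: algebra_simps)
    thus "(a * b + t) * (1 + - q * t) = a * b" using pq unfolding p_def by simp
  qed
  have Da: "Drep \<alpha> = a * x" unfolding x_y_m_e_def Sa_def a_r_s_A_def using Drep_split[OF ca] .
  have Db: "Drep \<beta> = b * y" unfolding x_y_m_e_def Sb_def b_r'_s'_B_def using Drep_split[OF cb] .
  have eDX: "eps (Drep ((Sa * M) * Sb)) = 1"
  proof (rule Drep_eps[OF LA])
    show "Sa * M * Sb \<in> carrier_mat k k" using c cM by auto
    show "map_mat eps (Sa * M * Sb) = 1\<^sub>m k" using map_mult[OF LA, of "Sa * M" Sb] c cM eSaM eSb by simp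
  qed
  have s1: "eqC0 eps (Drep (\<alpha> * \<beta>)) (p * (Drep (Sa * M) * y) * 1)"
    unfolding D1 D2 D3 x_y_m_e_def
    using eqC0_cong3[OF IH1, of p 1] ep exy eDX unfolding x_y_m_e_def by (simp add: hs')
  have s2: "eqC0 eps (p * (Drep (Sa * M) * y) * 1) (p * (x * e * y) * 1)"
  proof -
    have "eqC0 eps (1 * Drep (Sa * M) * y) (1 * (x * e) * y)"
    proof (rule eqC0_cong3[OF eqC0_trans[OF LA _ _ _ IH2]])
      show "eqC0 eps (Drep Sa * Drep M) (x * e)" using eqC0_cong3[OF Dv, of x 1] exy qt
        unfolding x_y_m_e_def by (simp add: hs')
    qed (use exy in \<open>auto simp: hs' x_y_m_e_def\<close>)
    hence "eqC0 eps (Drep (Sa * M) * y) (x * e * y)" by simp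
    thus ?thesis using eqC0_cong3[of "Drep (Sa * M) * y" "x * e * y" p 1] ep exy by (simp add: hs')
  qed
  have s3: "eqC0 eps (p * (x * e * y) * 1) (p * (e * x * y) * 1)"
    using eqC0_cong3[OF eqC0_cong3[OF eqC0_comm[OF LA, of x e], of 1 y], of p 1] ep exy by (simp add: hs')
  have s4: "p * (e * x * y) * 1 = a * (b * x) * y" using pe by (simp add: mult.assoc[symmetric])
  have s5: "eqC0 eps (a * (b * x) * y) (a * (x * b) * y)"
    using eqC0_cong3[OF eqC0_comm[OF LA, of b x], of a y] eab exy by (simp add: hs')
  have s6: "a * (x * b) * y = Drep \<alpha> * Drep \<beta>" unfolding Da Db by (simp add: mult.assoc)
  have e_all: "eps (Drep (\<alpha> * \<beta>)) = 1" "eps (p * (Drep (Sa * M) * y) * 1) = 1"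
    "eps (p * (x * e * y) * 1) = 1" "eps (p * (e * x * y) * 1) = 1" "eps (a * (x * b) * y) = 1"
    using ep exy eab Drep_eps[OF LA, of "\<alpha> * \<beta>" "Suc k"] ca cb map_mult[OF LA, of \<alpha> \<beta>] Suc.prems(3,4)
    by (auto simp: hs')
  have t1: "eqC0 eps (Drep (\<alpha> * \<beta>)) (p * (x * e * y) * 1)"
    by (rule eqC0_trans[OF LA e_all(1,2,3) s1 s2])
  have t2: "eqC0 eps (Drep (\<alpha> * \<beta>)) (p * (e * x * y) * 1)"
    by (rule eqC0_trans[OF LA e_all(1,3,4) t1 s3])
  have t3: "eqC0 eps (p * (e * x * y) * 1) (a * (x * b) * y)" using s5 s4 by simp
  have t4: "eqC0 eps (Drep (\<alpha> * \<beta>)) (a * (x * b) * y)"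
    by (rule eqC0_trans[OF LA e_all(1,4,5) t2 t3])
  show ?case using t4 s6 by simp
qed

end


context
  fixes eps :: "'b::ring_1 \<Rightarrow> 'a::ring_1" and jj :: "'a \<Rightarrow> 'b"
  assumes LA: "local_augmentation eps jj"
begin

lemmas hs2 = hom_simps[OF LA] hom_minus[OF LA] hom_uminus[OF LA] hom0[OF LA] hom_sum[OF LA]

lemma map_zero_prod: assumes "X \<in> carrier_mat k p" "Y \<in> carrier_mat p q"
  "map_mat eps X = 0\<^sub>m k p \<or> map_mat eps Y = 0\<^sub>m p q"
  shows "map_mat eps (X * Y) = 0\<^sub>m k q"
  using assms map_mult[OF LA, of X Y] by auto

lemma map_1plus: assumes "X \<in> carrier_mat k p" "Y \<in> carrier_mat p k"
  "map_mat eps X = 0\<^sub>m k p \<or> map_mat eps Y = 0\<^sub>m p k"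
  shows "map_mat eps (1\<^sub>m k + X * Y) = 1\<^sub>m k"
proof -
  have z: "map_mat eps (X * Y) = 0\<^sub>m k k" by (rule map_zero_prod[OF assms])
  have "i < k \<Longrightarrow> j < k \<Longrightarrow> eps ((X * Y) $$ (i,j)) = 0" for i j
    using eps_idx[OF LA z, of i j] assms by simp
  thus ?thesis using assms by (intro eq_matI) (auto simp: hs2 simp del: index_mult_mat(1))
qed

lemma D_b: "\<alpha> \<in> carrier_mat m n \<Longrightarrow> \<beta> \<in> carrier_mat n m \<Longrightarrow>
  map_mat eps \<alpha> = 0\<^sub>m m n \<or> map_mat eps \<beta> = 0\<^sub>m n m \<Longrightarrow>
  eqC0 eps (Drep (1\<^sub>m m + \<alpha> * \<beta>)) (Drep (1\<^sub>m n + \<beta> * \<alpha>))"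
proof (induction n arbitrary: m \<alpha> \<beta>)
  case 0
  have "1\<^sub>m m + \<alpha> * \<beta> = 1\<^sub>m m" using 0 by (intro eq_matI) (auto simp: scalar_prod_def)
  moreover have "Drep (1\<^sub>m 0 + \<beta> * \<alpha>) = 1" using 0 by (intro Drep0) auto
  ultimately show ?case using eqC0_refl[OF LA, of 1] by (simp add: Drep_one hs2)
next
  case (Suc n)
  note ca = Suc.prems(1) and cb = Suc.prems(2)
  define \<alpha>1 where "\<alpha>1 = mat m 1 (\<lambda>(i,_). \<alpha> $$ (i,0))"
  define \<alpha>' where "\<alpha>' = mat m n (\<lambda>(i,j). \<alpha> $$ (i,j+1))"
  define \<beta>1 where "\<beta>1 = mat 1 m (\<lambda>(_,j). \<beta> $$ (0,j))"
  define \<beta>' where "\<beta>' = mat n m (\<lambda>(i,j). \<beta> $$ (i+1,j))"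
  have c: "\<alpha>1 \<in> carrier_mat m 1" "\<alpha>' \<in> carrier_mat m n" "\<beta>1 \<in> carrier_mat 1 m" "\<beta>' \<in> carrier_mat n m"
    unfolding \<alpha>1_def \<alpha>'_def \<beta>1_def \<beta>'_def by auto
  have Z: "(map_mat eps \<alpha>1 = 0\<^sub>m m 1 \<and> map_mat eps \<alpha>' = 0\<^sub>m m n) \<or>
           (map_mat eps \<beta>1 = 0\<^sub>m 1 m \<and> map_mat eps \<beta>' = 0\<^sub>m n m)"
  proof (cases "map_mat eps \<alpha> = 0\<^sub>m m (Suc n)")
    case True
    show ?thesis using eps_idx[OF LA True] ca unfolding \<alpha>1_def \<alpha>'_def
      by (intro disjI1 conjI eq_matI) auto
  next
    case False
    hence F: "map_mat eps \<beta> = 0\<^sub>m (Suc n) m" using Suc.prems(3) by simp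
    show ?thesis using eps_idx[OF LA F] cb unfolding \<beta>1_def \<beta>'_def
      by (intro disjI2 conjI eq_matI) auto
  qed
  define t1 where "t1 = (\<beta>1 * \<alpha>1) $$ (0,0)"
  have et1: "eps t1 = 0" unfolding t1_def
    using eps_idx[OF LA map_zero_prod[OF c(3) c(1)]] Z c by auto
  have e1: "eps (1 + t1) = 1" using et1 by (simp add: hs2)
  define cc1 where "cc1 = uinv (1 + t1)"
  have cu: "(1 + t1) * cc1 = 1" "cc1 * (1 + t1) = 1" using unit_eps[OF LA e1] unfolding cc1_def by auto
  define T where "T = 1\<^sub>m m - \<alpha>1 * sc cc1 * \<beta>1"
  have cT: "T \<in> carrier_mat m m" unfolding T_def using c by auto
  have F1: "\<alpha> * \<beta> = \<alpha>1 * \<beta>1 + \<alpha>' * \<beta>'"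
    using ca cb c unfolding \<alpha>1_def \<alpha>'_def \<beta>1_def \<beta>'_def
    by (intro eq_matI) (simp_all add: mult_index_sum sum.lessThan_Suc_shift del: index_mult_mat(1) sum.lessThan_Suc)
  have F2: "1\<^sub>m (Suc n) + \<beta> * \<alpha> = four_block_mat (sc (1 + t1)) (\<beta>1 * \<alpha>') (\<beta>' * \<alpha>1) (1\<^sub>m n + \<beta>' * \<alpha>')"
    using ca cb c unfolding t1_def \<alpha>1_def \<alpha>'_def \<beta>1_def \<beta>'_def
    by (intro eq_matI) (auto simp: scalar_prod_def)
  have F3: "Drep (1\<^sub>m (Suc n) + \<beta> * \<alpha>) = (1 + t1) * Drep (1\<^sub>m n + \<beta>' * \<alpha>' - \<beta>' * \<alpha>1 * sc cc1 * (\<beta>1 * \<alpha>'))"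
    unfolding F2 cc1_def using c by (intro Drep_block) auto
  have F4: "1\<^sub>m n + \<beta>' * \<alpha>' - \<beta>' * \<alpha>1 * sc cc1 * (\<beta>1 * \<alpha>') = 1\<^sub>m n + \<beta>' * (T * \<alpha>')"
  proof -
    have q1: "sc cc1 \<in> carrier_mat 1 1" by (rule sc_carrier(1))
    have aq: "\<alpha>1 * sc cc1 \<in> carrier_mat m 1" using c(1) q1 by (rule mult_carrier_mat)
    have W: "\<alpha>1 * sc cc1 * \<beta>1 \<in> carrier_mat m m" using aq c(3) by (rule mult_carrier_mat)
    have Wa: "(\<alpha>1 * sc cc1 * \<beta>1) * \<alpha>' \<in> carrier_mat m n" using W c(2) by (rule mult_carrier_mat)
    have ba: "\<beta>1 * \<alpha>' \<in> carrier_mat 1 n" using c(3) c(2) by (rule mult_carrier_mat)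
    have h1: "T * \<alpha>' = \<alpha>' - (\<alpha>1 * sc cc1 * \<beta>1) * \<alpha>'" unfolding T_def
      using minus_mult_distrib_mat[OF one_carrier_mat W c(2)] c by simp
    have h2: "\<beta>' * (T * \<alpha>') = \<beta>' * \<alpha>' - \<beta>' * ((\<alpha>1 * sc cc1 * \<beta>1) * \<alpha>')"
      unfolding h1 by (rule mult_minus_distrib_mat[OF c(4) c(2) Wa])
    have h3: "\<beta>' * ((\<alpha>1 * sc cc1 * \<beta>1) * \<alpha>') = \<beta>' * \<alpha>1 * sc cc1 * (\<beta>1 * \<alpha>')"
    proof -
      have "(\<alpha>1 * sc cc1 * \<beta>1) * \<alpha>' = (\<alpha>1 * sc cc1) * (\<beta>1 * \<alpha>')" by (rule assoc_mult_mat[OF aq c(3) c(2)])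
      moreover have "\<beta>' * ((\<alpha>1 * sc cc1) * (\<beta>1 * \<alpha>')) = (\<beta>' * (\<alpha>1 * sc cc1)) * (\<beta>1 * \<alpha>')"
        by (rule assoc_mult_mat[OF c(4) aq ba, symmetric])
      moreover have "\<beta>' * (\<alpha>1 * sc cc1) = \<beta>' * \<alpha>1 * sc cc1" by (rule assoc_mult_mat[OF c(4) c(1) q1, symmetric])
      ultimately show ?thesis by simp
    qed
    show ?thesis unfolding h2 h3 using c by (intro eq_matI) auto
  qed
  have F5: "1\<^sub>m m + \<alpha> * \<beta> = (1\<^sub>m m + \<alpha>1 * \<beta>1) * (1\<^sub>m m + (T * \<alpha>') * \<beta>')"
  proof -
    have q1: "sc cc1 \<in> carrier_mat 1 1" by (rule sc_carrier(1))
    have aq: "\<alpha>1 * sc cc1 \<in> carrier_mat m 1" using c(1) q1 by (rule mult_carrier_mat)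
    have W: "\<alpha>1 * sc cc1 * \<beta>1 \<in> carrier_mat m m" using aq c(3) by (rule mult_carrier_mat)
    have ab1: "\<alpha>1 * \<beta>1 \<in> carrier_mat m m" using c(1) c(3) by (rule mult_carrier_mat)
    have Ta: "T * \<alpha>' \<in> carrier_mat m n" using cT c(2) by (rule mult_carrier_mat)
    have Tab: "(T * \<alpha>') * \<beta>' \<in> carrier_mat m m" using Ta c(4) by (rule mult_carrier_mat)
    have ab': "\<alpha>' * \<beta>' \<in> carrier_mat m m" using c(2) c(4) by (rule mult_carrier_mat)
    have b1a1: "\<beta>1 * \<alpha>1 = sc t1" unfolding t1_def using c by (intro mat11) auto
    have cx: "cc1 * x = x - t1 * (cc1 * x)" for x
    proof -
      have "cc1 + t1 * cc1 = 1" using cu(1) by (simp add: algebra_simps)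
      hence "cc1 = 1 - t1 * cc1" by (simp add: algebra_simps)
      hence "cc1 * x = (1 - t1 * cc1) * x" by simp
      thus ?thesis by (simp add: algebra_simps)
    qed
    have G1: "\<beta>1 * T = sc cc1 * \<beta>1"
    proof -
      have "\<beta>1 * T = \<beta>1 - \<beta>1 * (\<alpha>1 * sc cc1 * \<beta>1)" unfolding T_def
        using mult_minus_distrib_mat[OF c(3) one_carrier_mat W] c by simp
      also have "\<beta>1 * (\<alpha>1 * sc cc1 * \<beta>1) = ((\<beta>1 * \<alpha>1) * sc cc1) * \<beta>1"
      proof -
        have "\<beta>1 * (\<alpha>1 * sc cc1 * \<beta>1) = (\<beta>1 * (\<alpha>1 * sc cc1)) * \<beta>1"
          by (rule assoc_mult_mat[OF c(3) aq c(3), symmetric])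
        also have "\<beta>1 * (\<alpha>1 * sc cc1) = (\<beta>1 * \<alpha>1) * sc cc1"
          by (rule assoc_mult_mat[OF c(3) c(1) q1, symmetric])
        finally show ?thesis .
      qed
      also have "\<dots> = sc t1 * sc cc1 * \<beta>1" unfolding b1a1 ..
      also have "\<beta>1 - sc t1 * sc cc1 * \<beta>1 = sc cc1 * \<beta>1" using c
        by (intro eq_matI) (auto simp: cx[symmetric] mult.assoc simp del: index_mult_mat(1))
      finally show ?thesis .
    qed
    have G2: "(1\<^sub>m m + \<alpha>1 * \<beta>1) * T = 1\<^sub>m m"
    proof -
      have "(1\<^sub>m m + \<alpha>1 * \<beta>1) * T = T + (\<alpha>1 * \<beta>1) * T"
        using add_mult_distrib_mat[OF one_carrier_mat ab1 cT] cT by simp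
      also have "(\<alpha>1 * \<beta>1) * T = \<alpha>1 * (sc cc1 * \<beta>1)" unfolding G1[symmetric]
        by (rule assoc_mult_mat[OF c(1) c(3) cT])
      also have "T + \<alpha>1 * (sc cc1 * \<beta>1) = 1\<^sub>m m" unfolding T_def using c
        by (intro eq_matI) (auto simp: mult.assoc simp del: index_mult_mat(1))
      finally show ?thesis .
    qed
    have o1: "1\<^sub>m m + \<alpha>1 * \<beta>1 \<in> carrier_mat m m" using ab1 by auto
    have "(1\<^sub>m m + \<alpha>1 * \<beta>1) * (1\<^sub>m m + (T * \<alpha>') * \<beta>')
       = (1\<^sub>m m + \<alpha>1 * \<beta>1) * 1\<^sub>m m + (1\<^sub>m m + \<alpha>1 * \<beta>1) * ((T * \<alpha>') * \<beta>')"
      by (rule mult_add_distrib_mat[OF o1 one_carrier_mat Tab])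
    also have "(1\<^sub>m m + \<alpha>1 * \<beta>1) * ((T * \<alpha>') * \<beta>') = (((1\<^sub>m m + \<alpha>1 * \<beta>1) * T) * \<alpha>') * \<beta>'"
    proof -
      have o: "1\<^sub>m m + \<alpha>1 * \<beta>1 \<in> carrier_mat m m" using ab1 by auto
      have "(1\<^sub>m m + \<alpha>1 * \<beta>1) * ((T * \<alpha>') * \<beta>') = ((1\<^sub>m m + \<alpha>1 * \<beta>1) * (T * \<alpha>')) * \<beta>'"
        by (rule assoc_mult_mat[OF o Ta c(4), symmetric])
      also have "(1\<^sub>m m + \<alpha>1 * \<beta>1) * (T * \<alpha>') = ((1\<^sub>m m + \<alpha>1 * \<beta>1) * T) * \<alpha>'"
        by (rule assoc_mult_mat[OF o cT c(2), symmetric])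
      finally show ?thesis .
    qed
    also have "\<dots> = \<alpha>' * \<beta>'" unfolding G2 using c by simp
    also have "(1\<^sub>m m + \<alpha>1 * \<beta>1) * 1\<^sub>m m = 1\<^sub>m m + \<alpha>1 * \<beta>1" by (rule right_mult_one_mat[OF o1])
    finally have "(1\<^sub>m m + \<alpha>1 * \<beta>1) * (1\<^sub>m m + (T * \<alpha>') * \<beta>') = 1\<^sub>m m + \<alpha>1 * \<beta>1 + \<alpha>' * \<beta>'" .
    also have "\<dots> = 1\<^sub>m m + \<alpha> * \<beta>" unfolding F1 by (rule assoc_add_mat[OF one_carrier_mat ab1 ab'])
    finally show ?thesis by simp
  qed
  define P Q R where "P = 1\<^sub>m m + \<alpha>1 * \<beta>1" "Q = 1\<^sub>m m + (T * \<alpha>') * \<beta>'" "R = 1\<^sub>m n + \<beta>' * (T * \<alpha>')"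
  have Ta: "T * \<alpha>' \<in> carrier_mat m n" using cT c(2) by (rule mult_carrier_mat)
  have cPQR: "P \<in> carrier_mat m m" "Q \<in> carrier_mat m m" "R \<in> carrier_mat n n"
    unfolding P_Q_R_def using c Ta by auto
  have Z2: "map_mat eps (T * \<alpha>') = 0\<^sub>m m n \<or> map_mat eps \<beta>' = 0\<^sub>m n m"
    using Z map_zero_prod[OF cT c(2)] by auto
  have eP: "map_mat eps P = 1\<^sub>m m" unfolding P_Q_R_def by (rule map_1plus[OF c(1) c(3)]) (use Z in auto)
  have eQ: "map_mat eps Q = 1\<^sub>m m" unfolding P_Q_R_def by (rule map_1plus[OF Ta c(4) Z2])
  have eR: "map_mat eps R = 1\<^sub>m n" unfolding P_Q_R_def by (rule map_1plus[OF c(4) Ta]) (use Z2 in auto)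
  have DM: "eqC0 eps (Drep (P * Q)) (Drep P * Drep Q)" by (rule D_mult[OF LA cPQR(1,2) eP eQ])
  have Dv: "eqC0 eps (Drep P) (1 + t1)" unfolding P_Q_R_def t1_def
    by (rule D_vec[OF LA c(1) c(3)]) (use Z in auto)
  have IH: "eqC0 eps (Drep Q) (Drep R)" unfolding P_Q_R_def by (rule Suc.IH[OF Ta c(4) Z2])
  have eD: "eps (Drep P) = 1" "eps (Drep Q) = 1" "eps (Drep R) = 1" "eps (Drep (P * Q)) = 1"
    using Drep_eps[OF LA cPQR(1) eP] Drep_eps[OF LA cPQR(2) eQ] Drep_eps[OF LA cPQR(3) eR]
      Drep_eps[OF LA mult_carrier_mat[OF cPQR(1,2)]] map_mult[OF LA, of P Q] eP eQ cPQR by auto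
  have M2: "eqC0 eps (Drep P * Drep Q) ((1 + t1) * Drep R)"
    by (rule eqC0_mult[OF LA eD(1,2) e1 eD(3) Dv IH])
  have e3: "eps (Drep P * Drep Q) = 1" "eps ((1 + t1) * Drep R) = 1" using eD e1 by (auto simp: hs2)
  have "eqC0 eps (Drep (P * Q)) ((1 + t1) * Drep R)"
    by (rule eqC0_trans[OF LA eD(4) e3 DM M2])
  moreover have "Drep (1\<^sub>m m + \<alpha> * \<beta>) = Drep (P * Q)" unfolding F5 P_Q_R_def ..
  moreover have "Drep (1\<^sub>m (Suc n) + \<beta> * \<alpha>) = (1 + t1) * Drep R" unfolding F3 F4 P_Q_R_def ..
  ultimately show ?case by simp
qed

end


theorem proposition4p5:
  fixes eps :: "'b::ring_1 \<Rightarrow> 'a::ring_1" and j :: "'a \<Rightarrow> 'b"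
  assumes "local_augmentation eps j"
  shows "(\<forall>n (\<alpha> :: 'b mat) \<beta>. \<alpha> \<in> carrier_mat n n \<longrightarrow> \<beta> \<in> carrier_mat n n \<longrightarrow>
            invertible_mat \<alpha> \<longrightarrow> invertible_mat \<beta> \<longrightarrow>
            map_mat eps \<alpha> = 1\<^sub>m n \<longrightarrow> map_mat eps \<beta> = 1\<^sub>m n \<longrightarrow>
            eqC0 eps (Drep (\<alpha> * \<beta>)) (Drep \<alpha> * Drep \<beta>))
       \<and> (\<forall>m n (\<alpha> :: 'b mat) \<beta>. \<alpha> \<in> carrier_mat m n \<longrightarrow> \<beta> \<in> carrier_mat n m \<longrightarrow>
            (map_mat eps \<alpha> = 0\<^sub>m m n \<or> map_mat eps \<beta> = 0\<^sub>m n m) \<longrightarrow>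
            eqC0 eps (Drep (1\<^sub>m m + \<alpha> * \<beta>)) (Drep (1\<^sub>m n + \<beta> * \<alpha>)))"
  using D_mult[OF assms] D_b[OF assms] by blast

end
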